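(* For $k\geq2$, the $4$-valent $(2k,0)$-cluster $\square(2k)$ has eigenvalue $4$ as a $D_4$-invariant eigenvalue with multiplicity at least $\lceil (k-1)/2\rceil$; that is, the space of $D_4$-invariant functions $u$ on $V(\square(2k))$ with $\Delta_{\square(2k)}u=4u$ has dimension at least $\lceil (k-1)/2\rceil$.
   Context: The $4$-valent $(m,0)$-cluster $\square(m)$ is the graph whose vertices are the barycenters of the $m^2$ unit squares of the square lattice contained in the square with vertices $0,m,(1+i)m,im$, adjacent when the squares share an edge (the $m\times m$ grid graph), with Laplacian $(\Delta_{\square(m)}u)(x)=\deg(x)u(x)-\sum_{y\sim x}u(y)$. The dihedral group $D_4$ of symmetries of the square acts on $V(\square(m))$; $u$ is $D_4$-invariant if $u(\sigma x)=u(x)$ for all $\sigma\in D_4$ and all $x$. *)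

theory Defs
  imports "HOL-Analysis.Analysis" "HOL-Library.Function_Algebras"
begin

text \<open>The m x m grid graph: the square with vertices 0, m, (1+i)m, im contains the
  unit squares [i,i+1] x [j,j+1], 0 <= i,j < m; the barycenter (i+1/2, j+1/2) is
  encoded by the pair (i,j).\<close>

definition sq_V :: "nat \<Rightarrow> (nat \<times> nat) set" where
  "sq_V m = {(i,j). i < m \<and> j < m}"

definition sq_adj :: "nat \<Rightarrow> nat \<times> nat \<Rightarrow> nat \<times> nat \<Rightarrow> bool" where
  "sq_adj m x y \<longleftrightarrow> x \<in> sq_V m \<and> y \<in> sq_V m \<and>
     ((fst x = fst y \<and> (snd y = snd x + 1 \<or> snd x = snd y + 1)) \<or>
      (snd x = snd y \<and> (fst y = fst x + 1 \<or> fst x = fst y + 1)))"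

definition sq_nbrs :: "nat \<Rightarrow> nat \<times> nat \<Rightarrow> (nat \<times> nat) set" where
  "sq_nbrs m x = {y \<in> sq_V m. sq_adj m x y}"

definition sq_deg :: "nat \<Rightarrow> nat \<times> nat \<Rightarrow> nat" where
  "sq_deg m x = card (sq_nbrs m x)"

definition sq_lap :: "nat \<Rightarrow> (nat \<times> nat \<Rightarrow> real) \<Rightarrow> nat \<times> nat \<Rightarrow> real" where
  "sq_lap m u x = real (sq_deg m x) * u x - (\<Sum>y\<in>sq_nbrs m x. u y)"

text \<open>The dihedral group D4 of symmetries of the square, acting on the vertices
  (the barycenter (i+1/2, j+1/2) is mapped by the symmetries of the square
  [0,m]^2; in index coordinates this replaces i by m-1-i etc.).\<close>
definition D4 :: "nat \<Rightarrow> (nat \<times> nat \<Rightarrow> nat \<times> nat) set" where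
  "D4 m = (let r = m - 1 in
     { (\<lambda>(i,j). (i, j)),
       (\<lambda>(i,j). (r - j, i)),
       (\<lambda>(i,j). (r - i, r - j)),
       (\<lambda>(i,j). (j, r - i)),
       (\<lambda>(i,j). (r - i, j)),
       (\<lambda>(i,j). (i, r - j)),
       (\<lambda>(i,j). (j, i)),
       (\<lambda>(i,j). (r - j, r - i)) })"

text \<open>Real-valued functions on V(square(m)), represented as functions on nat x nat
  vanishing outside the vertex set.\<close>
definition sq_functions :: "nat \<Rightarrow> (nat \<times> nat \<Rightarrow> real) set" where
  "sq_functions m = {u. \<forall>x. x \<notin> sq_V m \<longrightarrow> u x = 0}"

definition D4_invariant :: "nat \<Rightarrow> (nat \<times> nat \<Rightarrow> real) \<Rightarrow> bool" where
  "D4_invariant m u \<longleftrightarrow> (\<forall>\<sigma>\<in>D4 m. \<forall>x\<in>sq_V m. u (\<sigma> x) = u x)"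

definition D4_eigenspace :: "nat \<Rightarrow> real \<Rightarrow> (nat \<times> nat \<Rightarrow> real) set" where
  "D4_eigenspace m lam =
     {u \<in> sq_functions m. D4_invariant m u \<and> (\<forall>x\<in>sq_V m. sq_lap m u x = lam * u x)}"

text \<open>Pointwise scalar multiplication; dimension is taken in the real vector space
  of functions nat x nat => real with this scaling.\<close>
definition fscale :: "real \<Rightarrow> (nat \<times> nat \<Rightarrow> real) \<Rightarrow> (nat \<times> nat \<Rightarrow> real)" where
  "fscale c u = (\<lambda>x. c * u x)"

end

theory Submission
  imports Defs
begin


lemma sum_fun_apply: "(sum f A) x = (\<Sum>a\<in>A. f a x)"
proof (cases "finite A")
  case True then show ?thesis by (induction A rule: finite_induct) auto
qed auto

lemma vs: "vector_space fscale"
  by unfold_locales (auto simp: fscale_def fun_eq_iff algebra_simps)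

interpretation F: vector_space fscale by (rule vs)

definition ind :: "int \<Rightarrow> int \<Rightarrow> real" where
  "ind n x = (if n dvd x then 1 else 0)"

lemma ind_eqI1: "n dvd (x - y) \<Longrightarrow> ind n x = ind n y"
  unfolding ind_def by (metis dvd_diff_commute dvd_trans dvd_diff diff_add_cancel dvd_add)
lemma ind_eqI2: "n dvd (x + y) \<Longrightarrow> ind n x = ind n y"
  unfolding ind_def by (metis add_diff_cancel_left' dvd_diff dvd_minus_iff add.commute diff_minus_eq_add minus_diff_eq)

definition par :: "int \<Rightarrow> real" where "par i = (if even i then 1 else -1)"

definition al :: "int \<Rightarrow> int \<Rightarrow> int \<Rightarrow> real" where
  "al n c s = ind n (s - c) - ind n (s + 2 + c)"
definition be :: "int \<Rightarrow> int \<Rightarrow> int \<Rightarrow> real" where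
  "be n c d = ind n (d - c - 1) - ind n (d + c + 1)"
definition UU :: "int \<Rightarrow> int \<Rightarrow> int \<Rightarrow> int \<Rightarrow> real" where
  "UU n c i j = par i * (al n c (i + j) + be n c (i - j))"

lemma par_Suc: "par (i + 1) = - par i" "par (i - 1) = - par i"
  by (auto simp: par_def)

lemma UU_nbr: "UU n c (i+1) j + UU n c (i-1) j + UU n c i (j+1) + UU n c i (j-1) = 0"
  unfolding UU_def par_Suc by (simp add: algebra_simps)



lemma UU_bd: "UU n c (-1) j = UU n c 0 j"
proof -
  have "ind n (-1 - j - c - 1) = ind n (j + 2 + c)" by (rule ind_eqI2) simp
  moreover have "ind n (- j + c + 1) = ind n (j - 1 - c)" by (rule ind_eqI2) simp
  moreover have "ind n (- j - c - 1) = ind n (j + c + 1)" by (rule ind_eqI2) simp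
  moreover have "ind n (c - j) = ind n (j - c)" by (rule ind_eqI2) simp
  ultimately show ?thesis unfolding UU_def al_def be_def par_def
    by (simp add: algebra_simps)
qed

lemma UU_R: assumes "even n" shows "UU n c (n-1-i) j = UU n c i j"
proof -
  have p: "par (n-1-i) = - par i" using assms by (auto simp: par_def)
  have "ind n (n-1-i+j-c) = ind n (i - j + c + 1)" by (rule ind_eqI2) simp
  moreover have "ind n (n-1-i+j+2+c) = ind n (i - j - c - 1)" by (rule ind_eqI2) simp
  moreover have "ind n (n-1-i-j-c-1) = ind n (i + j + 2 + c)" by (rule ind_eqI2) simp
  moreover have "ind n (n-1-i-j+c+1) = ind n (i + j - c)" by (rule ind_eqI2) simp
  ultimately show ?thesis unfolding UU_def al_def be_def p
    by (simp add: algebra_simps)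
qed

lemma ind_even: "even n \<Longrightarrow> ind n x \<noteq> 0 \<Longrightarrow> even x"
  unfolding ind_def by (auto split: if_splits)

lemma UU_swap: assumes "even n" "even c" shows "UU n c j i = UU n c i j"
proof -
  have a: "par j * al n c (j + i) = par i * al n c (i + j)"
  proof (cases "al n c (i+j) = 0")
    case False
    then have "ind n (i + j - c) \<noteq> 0 \<or> ind n (i + j + 2 + c) \<noteq> 0" unfolding al_def by auto
    then have "even (i + j)" using ind_even[OF assms(1)] assms(2) by fastforce
    then have "par j = par i" unfolding par_def by auto
    then show ?thesis by (simp add: add.commute)
  qed (simp add: add.commute)
  have b0: "be n c (j - i) = - be n c (i - j)"
  proof -
    have "ind n (j - i - c - 1) = ind n (i - j + c + 1)" by (rule ind_eqI2) simp
    moreover have "ind n (j - i + c + 1) = ind n (i - j - c - 1)" by (rule ind_eqI2) simp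
    ultimately show ?thesis unfolding be_def by simp
  qed
  have b: "par j * be n c (j - i) = par i * be n c (i - j)"
  proof (cases "be n c (i-j) = 0")
    case False
    then have "ind n (i - j - c - 1) \<noteq> 0 \<or> ind n (i - j + c + 1) \<noteq> 0" unfolding be_def by auto
    then have "odd (i - j)" using ind_even[OF assms(1)] assms(2) by fastforce
    then have "par j = - par i" unfolding par_def by auto
    then show ?thesis using b0 by simp
  qed (simp add: b0)
  show ?thesis unfolding UU_def using a b by (simp add: algebra_simps)
qed



lemma oneD:
  fixes g :: "nat \<Rightarrow> real" and H :: "int \<Rightarrow> real"
  assumes i: "i < m" and g: "\<And>a. a < m \<Longrightarrow> g a = H (int a)"
    and h1: "H (-1) = H 0" and h2: "H (int m) = H (int m - 1)"
  shows "(\<Sum>a\<in>{a. a < m \<and> (a = i+1 \<or> i = a+1)}. g a)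
     + (2 - real (card {a. a < m \<and> (a = i+1 \<or> i = a+1)})) * g i = H (int i - 1) + H (int i + 1)"
proof -
  consider "i = 0" "i + 1 < m" | "i = 0" "m = 1" | "i > 0" "i + 1 < m" | "i > 0" "i + 1 = m"
    using i by linarith
  then show ?thesis
  proof cases
    case 1
    then have "{a. a < m \<and> (a = i+1 \<or> i = a+1)} = {1}" by auto
    then show ?thesis using 1 g[of 0] g[of 1] h1 by simp
  next
    case 2
    then have "{a. a < m \<and> (a = i+1 \<or> i = a+1)} = {}" by auto
    then show ?thesis unfolding \<open>_ = {}\<close> using 2 g[of 0] h1 h2 by simp
  next
    case 3
    then have "{a. a < m \<and> (a = i+1 \<or> i = a+1)} = {i-1, i+1}" by auto
    moreover have "i - 1 \<noteq> i + 1" by simp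
    moreover have "int (i - 1) = int i - 1" using 3 by simp
    ultimately show ?thesis using 3 g[of "i-1"] g[of i] g[of "i+1"] by (simp add: add.commute)
  next
    case 4
    then have eq: "{a. a < m \<and> (a = i+1 \<or> i = a+1)} = {i-1}" by auto
    have e1: "int (i - 1) = int i - 1" using 4 by simp
    have e: "int m = int i + 1" using 4 by simp
    from h2 have hh: "H (int i + 1) = H (int i)" by (simp add: e)
    show ?thesis unfolding eq using 4 g[of "i-1"] g[of i] hh e1 by simp
  qed
qed

lemma lap_eig:
  fixes f :: "nat \<times> nat \<Rightarrow> real" and G :: "int \<Rightarrow> int \<Rightarrow> real"
  assumes f: "\<And>i j. i < m \<Longrightarrow> j < m \<Longrightarrow> f (i,j) = G (int i) (int j)"
    and nb: "\<And>i j. G (i+1) j + G (i-1) j + G i (j+1) + G i (j-1) = 0"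
    and b1: "\<And>j. G (-1) j = G 0 j" and b2: "\<And>j. G (int m) j = G (int m - 1) j"
    and b3: "\<And>i. G i (-1) = G i 0" and b4: "\<And>i. G i (int m) = G i (int m - 1)"
    and x: "(i,j) \<in> sq_V m"
  shows "sq_lap m f (i,j) = 4 * f (i,j)"
proof -
  define Ia where "Ia = {a. a < m \<and> (a = i+1 \<or> i = a+1)}"
  define Ib where "Ib = {b. b < m \<and> (b = j+1 \<or> j = b+1)}"
  have ij: "i < m" "j < m" using x by (auto simp: sq_V_def)
  have fa: "finite Ia" "finite Ib" unfolding Ia_def Ib_def by auto
  have N: "sq_nbrs m (i,j) = (\<lambda>a. (a,j)) ` Ia \<union> (\<lambda>b. (i,b)) ` Ib"
    unfolding sq_nbrs_def sq_adj_def sq_V_def Ia_def Ib_def using ij by auto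
  have D: "(\<lambda>a. (a,j)) ` Ia \<inter> (\<lambda>b. (i,b)) ` Ib = {}" unfolding Ia_def by auto
  have injA: "inj_on (\<lambda>a. (a,j)) Ia" and injB: "inj_on (\<lambda>b. (i,b)) Ib" by (auto simp: inj_on_def)
  have deg: "real (sq_deg m (i,j)) = real (card Ia) + real (card Ib)"
    unfolding sq_deg_def N using card_Un_disjoint[OF _ _ D] fa card_image[OF injA] card_image[OF injB] by simp
  have S: "(\<Sum>y\<in>sq_nbrs m (i,j). f y) = (\<Sum>a\<in>Ia. f (a,j)) + (\<Sum>b\<in>Ib. f (i,b))"
  proof -
    have "(\<Sum>y\<in>sq_nbrs m (i,j). f y) = sum f ((\<lambda>a. (a,j)) ` Ia) + sum f ((\<lambda>b. (i,b)) ` Ib)"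
      unfolding N by (rule sum.union_disjoint) (use fa D in auto)
    also have "\<dots> = (\<Sum>a\<in>Ia. f (a,j)) + (\<Sum>b\<in>Ib. f (i,b))"
      by (simp add: sum.reindex[OF injA] sum.reindex[OF injB])
    finally show ?thesis .
  qed
  have A: "(\<Sum>a\<in>Ia. f (a,j)) + (2 - real (card Ia)) * f (i,j) = G (int i - 1) (int j) + G (int i + 1) (int j)"
    unfolding Ia_def by (rule oneD[where H="\<lambda>a. G a (int j)"]) (use ij f b1 b2 in auto)
  have B: "(\<Sum>b\<in>Ib. f (i,b)) + (2 - real (card Ib)) * f (i,j) = G (int i) (int j - 1) + G (int i) (int j + 1)"
    unfolding Ib_def by (rule oneD[where H="\<lambda>b. G (int i) b" and g="\<lambda>b. f (i,b)"]) (use ij f b3 b4 in auto)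
  have "sq_lap m f (i,j) = (real (card Ia) + real (card Ib)) * f (i,j) - ((\<Sum>a\<in>Ia. f (a,j)) + (\<Sum>b\<in>Ib. f (i,b)))"
    unfolding sq_lap_def deg S ..
  also have "\<dots> = 4 * f (i,j) - (G (int i - 1) (int j) + G (int i + 1) (int j) + G (int i) (int j - 1) + G (int i) (int j + 1))"
    using A B by (simp add: algebra_simps)
  also have "\<dots> = 4 * f (i,j)" using nb[of "int i" "int j"] by (simp add: algebra_simps)
  finally show ?thesis .
qed



definition uf :: "nat \<Rightarrow> nat \<Rightarrow> nat \<times> nat \<Rightarrow> real" where
  "uf n c = (\<lambda>(i,j). if i < n \<and> j < n then UU (int n) (int c) (int i) (int j) else 0)"

lemma uf_in: "i < n \<Longrightarrow> j < n \<Longrightarrow> uf n c (i,j) = UU (int n) (int c) (int i) (int j)"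
  by (simp add: uf_def)

lemma uf_eig:
  assumes n: "even n" and c: "even c"
  shows "uf n c \<in> D4_eigenspace n 4"
proof -
  let ?G = "UU (int n) (int c)"
  have en: "even (int n)" and ec: "even (int c)" using n c by auto
  have Ri: "\<And>i j. ?G (int n - 1 - i) j = ?G i j" using UU_R[OF en] by blast
  have Sw: "\<And>i j. ?G j i = ?G i j" using UU_swap[OF en ec] by blast
  have Rj: "\<And>i j. ?G i (int n - 1 - j) = ?G i j" using Ri Sw by metis
  have b1: "\<And>j. ?G (-1) j = ?G 0 j" by (rule UU_bd)
  have b2: "\<And>j. ?G (int n) j = ?G (int n - 1) j"
    using Ri[of "-1"] Ri[of 0] b1 by simp
  have b3: "\<And>i. ?G i (-1) = ?G i 0" using Sw b1 by metis
  have b4: "\<And>i. ?G i (int n) = ?G i (int n - 1)" using Sw b2 by metis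
  have hfun: "uf n c \<in> sq_functions n"
    unfolding sq_functions_def sq_V_def uf_def by auto
  have eig: "\<forall>x\<in>sq_V n. sq_lap n (uf n c) x = 4 * uf n c x"
  proof
    fix x assume "x \<in> sq_V n"
    then obtain i j where x: "x = (i,j)" "(i,j) \<in> sq_V n" by (cases x) auto
    show "sq_lap n (uf n c) x = 4 * uf n c x" unfolding x(1)
      by (rule lap_eig[where G="?G"]) (use uf_in UU_nbr b1 b2 b3 b4 x(2) in auto)
  qed
  have inv: "D4_invariant n (uf n c)"
    unfolding D4_invariant_def
  proof (intro ballI)
    fix \<sigma> x assume s: "\<sigma> \<in> D4 n" and "x \<in> sq_V n"
    then obtain i j where x: "x = (i,j)" "i < n" "j < n" by (cases x) (auto simp: sq_V_def)
    have ij: "int (n - Suc i) = int n - 1 - int i" "int (n - Suc j) = int n - 1 - int j"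
      using x by auto
    have l: "n - Suc i < n" "n - Suc j < n" using x by auto
    show "uf n c (\<sigma> x) = uf n c x"
      using s unfolding D4_def Let_def x(1)
      by (auto simp: uf_in x(2,3) l ij Ri Rj Sw)
  qed
  show ?thesis unfolding D4_eigenspace_def using hfun inv eig by auto
qed



lemma ind_zero:
  assumes "0 < \<bar>x\<bar>" "\<bar>x\<bar> < n" shows "ind n x = 0"
proof -
  have "\<not> n dvd x"
  proof
    assume "n dvd x"
    then have "\<bar>n\<bar> \<le> \<bar>x\<bar>" using dvd_imp_le_int assms(1) by simp
    then show False using assms by simp
  qed
  then show ?thesis by (simp add: ind_def)
qed

lemma ind_odd: assumes "even n" "odd x" shows "ind n x = 0"
proof -
  have "\<not> n dvd x"
  proof
    assume "n dvd x"
    then have "2 dvd x" using assms(1) dvd_trans by blast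
    then show False using assms(2) by simp
  qed
  then show ?thesis by (simp add: ind_def)
qed

lemma ind_0: "ind n 0 = 1" by (simp add: ind_def)

lemma uf_row:
  assumes k: "k \<ge> 2" and t: "2*t + 2 \<le> k" and t': "2*t' + 2 \<le> k"
  shows "uf (2*k) (2*t') (0, 2*t) = (if t' = t then 1 else 0)"
proof -
  let ?n = "int (2*k)" and ?c = "int (2*t)" and ?c' = "int (2*t')"
  have v: "uf (2*k) (2*t') (0, 2*t) = UU ?n ?c' 0 ?c" using t by (simp add: uf_in)
  have en: "even ?n" by simp
  have "UU ?n ?c' 0 ?c = ind ?n (?c - ?c') - ind ?n (?c + 2 + ?c') + ind ?n (- ?c - ?c' - 1) - ind ?n (- ?c + ?c' + 1)"
    unfolding UU_def al_def be_def par_def by simp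
  also have "ind ?n (?c + 2 + ?c') = 0" by (rule ind_zero) (use t t' in auto)
  also have "ind ?n (- ?c - ?c' - 1) = 0" by (rule ind_odd[OF en]) simp
  also have "ind ?n (- ?c + ?c' + 1) = 0" by (rule ind_odd[OF en]) simp
  also have "ind ?n (?c - ?c') = (if t' = t then 1 else 0)"
  proof (cases "t' = t")
    case True then show ?thesis by (simp add: ind_0)
  next
    case False then show ?thesis by (simp, intro ind_zero) (use t t' in auto)
  qed
  finally show ?thesis using v by simp
qed

lemma span_all: "sq_functions n \<subseteq> F.span ((\<lambda>p x. if x = p then 1 else 0) ` sq_V n)"
proof
  fix u assume u: "u \<in> sq_functions n"
  have fin: "finite (sq_V n)"
    by (rule finite_subset[of _ "{..<n} \<times> {..<n}"]) (auto simp: sq_V_def)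
  have "u = (\<Sum>p\<in>sq_V n. fscale (u p) (\<lambda>x. if x = p then 1 else 0))"
  proof
    fix x
    have "(\<Sum>p\<in>sq_V n. fscale (u p) (\<lambda>x. if x = p then 1 else 0)) x = (\<Sum>p\<in>sq_V n. if x = p then u p else 0)"
      unfolding sum_fun_apply fscale_def by (rule sum.cong) auto
    also have "\<dots> = u x"
    proof -
      have z: "\<forall>x. x \<notin> sq_V n \<longrightarrow> u x = 0" using u by (simp add: sq_functions_def)
      show ?thesis
      proof (cases "x \<in> sq_V n")
        case True then show ?thesis using fin by (simp add: sum.delta)
      next
        case False
        then have "u x = 0" using z by blast
        then show ?thesis using fin False by (simp add: sum.delta)
      qed
    qed
    finally show "u x = (\<Sum>p\<in>sq_V n. fscale (u p) (\<lambda>x. if x = p then 1 else 0)) x" by simp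
  qed
  also have "\<dots> \<in> F.span ((\<lambda>p x. if x = p then 1 else 0) ` sq_V n)"
    by (intro F.span_sum F.span_scale F.span_base) auto
  finally show "u \<in> F.span ((\<lambda>p x. if x = p then 1 else 0) ` sq_V n)" .
qed

theorem lemma5p2:
  fixes k :: nat
  assumes "k \<ge> 2"
  shows "\<lceil>(real k - 1) / 2\<rceil> \<le> int (vector_space.dim fscale (D4_eigenspace (2 * k) 4))"
proof -
  define T where "T = {..< k div 2}"
  define fam where "fam t = uf (2*k) (2*t)" for t
  define V where "V = D4_eigenspace (2 * k) 4"
  have Tk: "\<And>t. t \<in> T \<Longrightarrow> 2*t + 2 \<le> k" unfolding T_def by auto
  have row: "\<And>t t'. t \<in> T \<Longrightarrow> t' \<in> T \<Longrightarrow> fam t' (0, 2*t) = (if t' = t then 1 else 0)"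
    unfolding fam_def using uf_row[OF assms] Tk by blast
  have inj: "inj_on fam T"
  proof (rule inj_onI)
    fix t t' assume a: "t \<in> T" "t' \<in> T" "fam t = fam t'"
    then have "fam t' (0, 2*t) = 1" using row[of t t] by simp
    then show "t = t'" using row[OF a(1,2)] by (auto split: if_splits)
  qed
  have AV: "fam ` T \<subseteq> V"
  proof
    fix x assume "x \<in> fam ` T"
    then obtain t where "x = fam t" by blast
    moreover have "uf (2*k) (2*t) \<in> D4_eigenspace (2*k) 4" by (rule uf_eig) simp_all
    ultimately show "x \<in> V" unfolding V_def fam_def by simp
  qed
  have ind: "F.independent (fam ` T)"
  proof (rule F.independent_if_scalars_zero)
    show "finite (fam ` T)" unfolding T_def by simp
  next
    fix f x assume s: "(\<Sum>x\<in>fam ` T. fscale (f x) x) = 0" and x: "x \<in> fam ` T"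
    from x obtain t where t: "t \<in> T" "x = fam t" by (rule imageE) blast
    have "0 = (\<Sum>x\<in>fam ` T. fscale (f x) x) (0, 2*t)" unfolding s by simp
    also have "\<dots> = (\<Sum>v\<in>fam ` T. f v * v (0, 2*t))" unfolding sum_fun_apply fscale_def ..
    also have "\<dots> = (\<Sum>t'\<in>T. f (fam t') * fam t' (0, 2*t))"
      by (rule sum.reindex_cong[OF inj refl]) (rule refl)
    also have "\<dots> = (\<Sum>t'\<in>T. if t' = t then f (fam t) else 0)"
    proof (rule sum.cong[OF refl])
      fix t' assume "t' \<in> T"
      then show "f (fam t') * fam t' (0, 2*t) = (if t' = t then f (fam t) else 0)"
        using row[OF t(1) \<open>t' \<in> T\<close>] by simp
    qed
    also have "\<dots> = f (fam t)" using t(1) by (simp only: sum.delta if_True finite_lessThan T_def)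
    finally show "f x = 0" using t(2) by simp
  qed
  obtain B where B: "B \<subseteq> V" "F.independent B" "V \<subseteq> F.span B" "card B = F.dim V"
    by (rule F.basis_exists)
  have finE: "finite ((\<lambda>p x. if x = p then 1 else 0) ` sq_V (2*k) :: (nat \<times> nat \<Rightarrow> real) set)"
    by (rule finite_imageI, rule finite_subset[of _ "{..<2*k} \<times> {..<2*k}"]) (auto simp: sq_V_def)
  have VS: "V \<subseteq> sq_functions (2*k)" unfolding V_def D4_eigenspace_def by (rule Collect_restrict)
  have BE: "B \<subseteq> F.span ((\<lambda>p x. if x = p then 1 else 0) ` sq_V (2*k))"
    using B(1) VS span_all by (meson order.trans)
  have finB: "finite B" using F.independent_span_bound[OF finE B(2) BE] by (rule conjunct1)
  have AB: "fam ` T \<subseteq> F.span B" using AV B(3) by (rule order.trans)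
  have cle: "card (fam ` T) \<le> card B"
    using F.independent_span_bound[OF finB ind AB] by (rule conjunct2)
  have cT: "k div 2 \<le> F.dim V"
  proof -
    have "card (fam ` T) = card T" by (rule card_image[OF inj])
    also have "card T = k div 2" unfolding T_def by (rule card_lessThan)
    finally show ?thesis using cle B(4) by linarith
  qed
  have "k = 2*(k div 2) + k mod 2" by simp
  moreover have "k mod 2 \<le> 1" by simp
  ultimately have kk: "k \<le> 2*(k div 2) + 1" by linarith
  have "real k \<le> real (2*(k div 2) + 1)" using kk by (simp only: of_nat_le_iff)
  then have "real k \<le> 2 * real (k div 2) + 1" by simp
  then have "(real k - 1) / 2 \<le> real (k div 2)" by simp
  then have "\<lceil>(real k - 1) / 2\<rceil> \<le> int (k div 2)" by (simp add: ceiling_le_iff)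
  also have "\<dots> \<le> int (F.dim V)" using cT by simp
  finally show ?thesis unfolding V_def .
qed

end
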